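(* Let $(\Phi,D)$ and $(\Psi,E)$ be domain-free s-continuous information algebras. Then $([\Phi\rightarrow\Psi]_c,D\times E)$, with pointwise combination $(f\otimes g)(\phi)=f(\phi)\otimes g(\phi)$ and focusing $f^{\Rightarrow(x,y)}(\phi)=(f(\phi^{\Rightarrow x}))^{\Rightarrow y}$, is a domain-free continuous information algebra.
   Context: A domain-free information algebra $(\Phi,D)$ consists of a set $\Phi$, a lattice $D$, a combination $\otimes$ and a focusing $(\psi,x)\mapsto\psi^{\Rightarrow x}$ ($x\in D$) such that: $\otimes$ is associative, commutative with neutral element $e$; $(\psi^{\Rightarrow y})^{\Rightarrow x}=\psi^{\Rightarrow x\wedge y}$; $(\phi^{\Rightarrow x}\otimes\psi)^{\Rightarrow x}=\phi^{\Rightarrow x}\otimes\psi^{\Rightarrow x}$; every $\psi$ has some $x$ with $\psi^{\Rightarrow x}=\psi$; $\psi\otimes\psi^{\Rightarrow x}=\psi$. Order: $\psi\le\phi$ iff $\psi\otimes\phi=\phi$; suprema refer to this order. $a\ll b$ means: for every directed $X$ with $b\le\vee X$ there is $c\in X$ with $a\le c$. $(\Phi,D)$, with $D$ having a top element, is continuous (resp. s-continuous) if there exists $\Gamma\subseteq\Phi$, closed under combination and containing $e$, such that every directed subset of $\Gamma$ has a supremum in $\Phi$ and $\phi=\vee\{\psi\in\Gamma:\psi\ll\phi\}$ for all $\phi$ (resp. $\phi^{\Rightarrow x}=\vee\{\psi\in\Gamma:\psi=\psi^{\Rightarrow x}\ll\phi\}$ for all $\phi,x$). $[\Phi\rightarrow\Psi]_c$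 denotes the set of maps $f:\Phi\to\Psi$ with $f(\vee X)=\vee f(X)$ for every directed $X\subseteq\Phi$; $D\times E$ is the product lattice. *)

theory Defs
  imports Main "HOL-Library.Product_Order"
begin

definition dfia :: "'a set \<Rightarrow> ('a \<Rightarrow> 'a \<Rightarrow> 'a) \<Rightarrow> 'a \<Rightarrow> ('a \<Rightarrow> 'd::lattice \<Rightarrow> 'a) \<Rightarrow> bool" where
  "dfia Phi comb e foc \<longleftrightarrow>
     (\<forall>a\<in>Phi. \<forall>b\<in>Phi. comb a b \<in> Phi) \<and> e \<in> Phi \<and>
     (\<forall>a\<in>Phi. \<forall>x. foc a x \<in> Phi) \<and>
     (\<forall>a\<in>Phi. \<forall>b\<in>Phi. \<forall>c\<in>Phi. comb (comb a b) c = comb a (comb b c)) \<and>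
     (\<forall>a\<in>Phi. \<forall>b\<in>Phi. comb a b = comb b a) \<and>
     (\<forall>a\<in>Phi. comb a e = a) \<and>
     (\<forall>a\<in>Phi. \<forall>x y. foc (foc a y) x = foc a (inf x y)) \<and>
     (\<forall>a\<in>Phi. \<forall>b\<in>Phi. \<forall>x. foc (comb (foc a x) b) x = comb (foc a x) (foc b x)) \<and>
     (\<forall>a\<in>Phi. \<exists>x. foc a x = a) \<and>
     (\<forall>a\<in>Phi. \<forall>x. comb a (foc a x) = a)"

definition ileq :: "('a \<Rightarrow> 'a \<Rightarrow> 'a) \<Rightarrow> 'a \<Rightarrow> 'a \<Rightarrow> bool" where
  "ileq comb a b \<longleftrightarrow> comb a b = b"

definition is_isup :: "'a set \<Rightarrow> ('a \<Rightarrow> 'a \<Rightarrow> 'a) \<Rightarrow> 'a set \<Rightarrow> 'a \<Rightarrow> bool" where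
  "is_isup Phi comb X s \<longleftrightarrow> s \<in> Phi \<and> (\<forall>a\<in>X. ileq comb a s) \<and>
     (\<forall>u\<in>Phi. (\<forall>a\<in>X. ileq comb a u) \<longrightarrow> ileq comb s u)"

definition idirected :: "('a \<Rightarrow> 'a \<Rightarrow> 'a) \<Rightarrow> 'a set \<Rightarrow> bool" where
  "idirected comb X \<longleftrightarrow> X \<noteq> {} \<and>
     (\<forall>a\<in>X. \<forall>b\<in>X. \<exists>c\<in>X. ileq comb a c \<and> ileq comb b c)"

definition way_below :: "'a set \<Rightarrow> ('a \<Rightarrow> 'a \<Rightarrow> 'a) \<Rightarrow> 'a \<Rightarrow> 'a \<Rightarrow> bool" where
  "way_below Phi comb a b \<longleftrightarrow>
     (\<forall>X s. X \<subseteq> Phi \<longrightarrow> idirected comb X \<longrightarrow> is_isup Phi comb X s \<longrightarrow> ileq comb b s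
        \<longrightarrow> (\<exists>c\<in>X. ileq comb a c))"

definition basis_ok :: "'a set \<Rightarrow> ('a \<Rightarrow> 'a \<Rightarrow> 'a) \<Rightarrow> 'a \<Rightarrow> 'a set \<Rightarrow> bool" where
  "basis_ok Phi comb e G \<longleftrightarrow> G \<subseteq> Phi \<and> e \<in> G \<and> (\<forall>a\<in>G. \<forall>b\<in>G. comb a b \<in> G) \<and>
     (\<forall>X. X \<subseteq> G \<longrightarrow> idirected comb X \<longrightarrow> (\<exists>s. is_isup Phi comb X s))"

definition continuous_ia :: "'a set \<Rightarrow> ('a \<Rightarrow> 'a \<Rightarrow> 'a) \<Rightarrow> 'a \<Rightarrow> ('a \<Rightarrow> 'd::lattice \<Rightarrow> 'a) \<Rightarrow> bool" where
  "continuous_ia Phi comb e foc \<longleftrightarrow> dfia Phi comb e foc \<and> (\<exists>t::'d. \<forall>x. x \<le> t) \<and>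
     (\<exists>G. basis_ok Phi comb e G \<and>
        (\<forall>p\<in>Phi. is_isup Phi comb {a\<in>G. way_below Phi comb a p} p))"

definition s_continuous_ia :: "'a set \<Rightarrow> ('a \<Rightarrow> 'a \<Rightarrow> 'a) \<Rightarrow> 'a \<Rightarrow> ('a \<Rightarrow> 'd::lattice \<Rightarrow> 'a) \<Rightarrow> bool" where
  "s_continuous_ia Phi comb e foc \<longleftrightarrow> dfia Phi comb e foc \<and> (\<exists>t::'d. \<forall>x. x \<le> t) \<and>
     (\<exists>G. basis_ok Phi comb e G \<and>
        (\<forall>p\<in>Phi. \<forall>x. is_isup Phi comb {a\<in>G. foc a x = a \<and> way_below Phi comb a p} (foc p x)))"

text \<open>[Phi \<rightarrow> Psi]_c: Scott-continuous maps (extensional: undefined outside Phi).\<close>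
definition cont_maps :: "'a set \<Rightarrow> ('a \<Rightarrow> 'a \<Rightarrow> 'a) \<Rightarrow> 'b set \<Rightarrow> ('b \<Rightarrow> 'b \<Rightarrow> 'b) \<Rightarrow> ('a \<Rightarrow> 'b) set" where
  "cont_maps Phi combP Psi combQ = {f. (\<forall>p\<in>Phi. f p \<in> Psi) \<and> (\<forall>p. p \<notin> Phi \<longrightarrow> f p = undefined) \<and>
     (\<forall>X s. X \<subseteq> Phi \<longrightarrow> idirected combP X \<longrightarrow> is_isup Phi combP X s \<longrightarrow>
        is_isup Psi combQ (f ` X) (f s))}"

definition fun_comb :: "'a set \<Rightarrow> ('b \<Rightarrow> 'b \<Rightarrow> 'b) \<Rightarrow> ('a \<Rightarrow> 'b) \<Rightarrow> ('a \<Rightarrow> 'b) \<Rightarrow> ('a \<Rightarrow> 'b)" where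
  "fun_comb Phi combQ f g = (\<lambda>p. if p \<in> Phi then combQ (f p) (g p) else undefined)"

definition fun_neutral :: "'a set \<Rightarrow> 'b \<Rightarrow> ('a \<Rightarrow> 'b)" where
  "fun_neutral Phi eQ = (\<lambda>p. if p \<in> Phi then eQ else undefined)"

definition fun_foc :: "'a set \<Rightarrow> ('a \<Rightarrow> 'd \<Rightarrow> 'a) \<Rightarrow> ('b \<Rightarrow> 'e \<Rightarrow> 'b) \<Rightarrow> ('a \<Rightarrow> 'b) \<Rightarrow> ('d \<times> 'e) \<Rightarrow> ('a \<Rightarrow> 'b)" where
  "fun_foc Phi focP focQ f xy = (\<lambda>p. if p \<in> Phi then focQ (f (focP p (fst xy))) (snd xy) else undefined)"

end

theory Submission
  imports Defs
begin


locale jsl =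
  fixes Phi :: "'a set" and comb :: "'a \<Rightarrow> 'a \<Rightarrow> 'a" and e :: 'a
  assumes cl: "a\<in>Phi \<Longrightarrow> b\<in>Phi \<Longrightarrow> comb a b \<in> Phi"
  and e_in: "e \<in> Phi"
  and assoc: "a\<in>Phi \<Longrightarrow> b\<in>Phi \<Longrightarrow> c\<in>Phi \<Longrightarrow> comb (comb a b) c = comb a (comb b c)"
  and commute: "a\<in>Phi \<Longrightarrow> b\<in>Phi \<Longrightarrow> comb a b = comb b a"
  and neut: "a\<in>Phi \<Longrightarrow> comb a e = a"
  and idem: "a\<in>Phi \<Longrightarrow> comb a a = a"
begin

abbreviation le where "le a b \<equiv> ileq comb a b"
abbreviation wb where "wb a b \<equiv> way_below Phi comb a b"

lemma le_refl: "a\<in>Phi \<Longrightarrow> le a a"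
  by (simp add: ileq_def idem)

lemma le_trans: "a\<in>Phi \<Longrightarrow> b\<in>Phi \<Longrightarrow> c\<in>Phi \<Longrightarrow> le a b \<Longrightarrow> le b c \<Longrightarrow> le a c"
  unfolding ileq_def using assoc[of a b c] by simp

lemma le_antisym: "a\<in>Phi \<Longrightarrow> b\<in>Phi \<Longrightarrow> le a b \<Longrightarrow> le b a \<Longrightarrow> a = b"
  unfolding ileq_def using commute[of a b] by simp

lemma le_comb1: "a\<in>Phi \<Longrightarrow> b\<in>Phi \<Longrightarrow> le a (comb a b)"
  unfolding ileq_def using assoc[of a a b] idem[of a] by simp

lemma le_comb2: "a\<in>Phi \<Longrightarrow> b\<in>Phi \<Longrightarrow> le b (comb a b)"
  unfolding ileq_def using assoc[of b a b] assoc[of a b b] commute[of a b] idem[of b] by simp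

lemma comb_least: "a\<in>Phi \<Longrightarrow> b\<in>Phi \<Longrightarrow> u\<in>Phi \<Longrightarrow> le a u \<Longrightarrow> le b u \<Longrightarrow> le (comb a b) u"
  unfolding ileq_def using assoc[of a b u] by simp

lemma e_le: "a\<in>Phi \<Longrightarrow> le e a"
  unfolding ileq_def using commute[of e a] e_in neut[of a] by simp

lemma comb_mono: "a\<in>Phi \<Longrightarrow> b\<in>Phi \<Longrightarrow> a'\<in>Phi \<Longrightarrow> b'\<in>Phi \<Longrightarrow> le a a' \<Longrightarrow> le b b'
   \<Longrightarrow> le (comb a b) (comb a' b')"
proof -
  assume A: "a\<in>Phi" "b\<in>Phi" "a'\<in>Phi" "b'\<in>Phi" "le a a'" "le b b'"
  have c: "comb a' b' \<in> Phi" using A cl by blast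
  have "le a (comb a' b')" using le_trans[OF A(1) A(3) c A(5) le_comb1[OF A(3) A(4)]] .
  moreover have "le b (comb a' b')" using le_trans[OF A(2) A(4) c A(6) le_comb2[OF A(3) A(4)]] .
  ultimately show ?thesis using comb_least A c by blast
qed

lemma isup_unique: "is_isup Phi comb X s \<Longrightarrow> is_isup Phi comb X s' \<Longrightarrow> s = s'"
  unfolding is_isup_def using le_antisym[of s s'] by blast

lemma isup_in: "is_isup Phi comb X s \<Longrightarrow> s \<in> Phi"
  unfolding is_isup_def by blast

lemma single_dir: "a \<in> Phi \<Longrightarrow> idirected comb {a}"
  unfolding idirected_def using le_refl by auto

lemma single_sup: "a \<in> Phi \<Longrightarrow> is_isup Phi comb {a} a"
  unfolding is_isup_def using le_refl by auto

lemma pair_dir: "a \<in> Phi \<Longrightarrow> b \<in> Phi \<Longrightarrow> le a b \<Longrightarrow> idirected comb {a,b}"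
  unfolding idirected_def using le_refl[of b] by blast

lemma pair_sup: "a \<in> Phi \<Longrightarrow> b \<in> Phi \<Longrightarrow> le a b \<Longrightarrow> is_isup Phi comb {a,b} b"
  unfolding is_isup_def using le_refl[of b] by blast

lemma wb_le: "b\<in>Phi \<Longrightarrow> wb a b \<Longrightarrow> le a b"
proof -
  assume b: "b\<in>Phi" and w: "wb a b"
  have "\<exists>c\<in>{b}. le a c"
    using w[unfolded way_below_def, rule_format, of "{b}" b] single_dir[OF b] single_sup[OF b] le_refl[OF b] b by blast
  then show ?thesis by simp
qed

lemma wb_mono_right: "b\<in>Phi \<Longrightarrow> b'\<in>Phi \<Longrightarrow> wb a b \<Longrightarrow> le b b' \<Longrightarrow> wb a b'"
  unfolding way_below_def
proof (intro allI impI)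
  fix X s assume A: "b\<in>Phi" "b'\<in>Phi" "\<forall>X s. X \<subseteq> Phi \<longrightarrow> idirected comb X \<longrightarrow> is_isup Phi comb X s \<longrightarrow> le b s \<longrightarrow> (\<exists>c\<in>X. le a c)"
    "le b b'" "X \<subseteq> Phi" "idirected comb X" "is_isup Phi comb X s" "le b' s"
  have "s\<in>Phi" using A(7) isup_in by blast
  then have "le b s" using le_trans[OF A(1) A(2) _ A(4) A(8)] by blast
  then show "\<exists>c\<in>X. le a c" using A by blast
qed

lemma wb_mono_left: "a\<in>Phi \<Longrightarrow> a'\<in>Phi \<Longrightarrow> le a a' \<Longrightarrow> wb a' b \<Longrightarrow> wb a b"
  unfolding way_below_def
proof (intro allI impI)
  fix X s assume A: "a\<in>Phi" "a'\<in>Phi" "le a a'" "\<forall>X s. X \<subseteq> Phi \<longrightarrow> idirected comb X \<longrightarrow> is_isup Phi comb X s \<longrightarrow> le b s \<longrightarrow> (\<exists>c\<in>X. le a' c)"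
    "X \<subseteq> Phi" "idirected comb X" "is_isup Phi comb X s" "le b s"
  then obtain c where "c\<in>X" "le a' c" by blast
  then show "\<exists>c\<in>X. le a c" using le_trans[OF A(1) A(2) _ A(3)] A(5) by blast
qed

lemma wb_comb: "a\<in>Phi \<Longrightarrow> a'\<in>Phi \<Longrightarrow> wb a b \<Longrightarrow> wb a' b \<Longrightarrow> wb (comb a a') b"
  unfolding way_below_def
proof (intro allI impI)
  fix X s assume A: "a\<in>Phi" "a'\<in>Phi" and w: "\<forall>X s. X \<subseteq> Phi \<longrightarrow> idirected comb X \<longrightarrow> is_isup Phi comb X s \<longrightarrow> le b s \<longrightarrow> (\<exists>c\<in>X. le a c)"
    and w': "\<forall>X s. X \<subseteq> Phi \<longrightarrow> idirected comb X \<longrightarrow> is_isup Phi comb X s \<longrightarrow> le b s \<longrightarrow> (\<exists>c\<in>X. le a' c)"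
    and X: "X \<subseteq> Phi" "idirected comb X" "is_isup Phi comb X s" "le b s"
  obtain c1 where c1: "c1\<in>X" "le a c1" using w X by blast
  obtain c2 where c2: "c2\<in>X" "le a' c2" using w' X by blast
  obtain c where c: "c\<in>X" "le c1 c" "le c2 c" using X(2) c1 c2 unfolding idirected_def by blast
  have cP: "c\<in>Phi" "c1\<in>Phi" "c2\<in>Phi" using c c1 c2 X(1) by blast+
  have "le (comb a a') c"
    using comb_least[OF A cP(1) le_trans[OF A(1) cP(2) cP(1) c1(2) c(2)] le_trans[OF A(2) cP(3) cP(1) c2(2) c(3)]] .
  then show "\<exists>c\<in>X. le (comb a a') c" using c by blast
qed

lemma wb_e: "wb e b"
  unfolding way_below_def idirected_def using e_le by blast

lemma mono_dir: "X \<subseteq> Phi \<Longrightarrow> idirected comb X \<Longrightarrow>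
   (\<And>p q. p\<in>Phi \<Longrightarrow> q\<in>Phi \<Longrightarrow> le p q \<Longrightarrow> ileq combQ (f p) (f q)) \<Longrightarrow> idirected combQ (f ` X)"
  unfolding idirected_def
proof (intro conjI ballI)
  assume A: "X \<subseteq> Phi" "X \<noteq> {} \<and> (\<forall>a\<in>X. \<forall>b\<in>X. \<exists>c\<in>X. le a c \<and> le b c)"
    "(\<And>p q. p\<in>Phi \<Longrightarrow> q\<in>Phi \<Longrightarrow> le p q \<Longrightarrow> ileq combQ (f p) (f q))"
  show "f ` X \<noteq> {}" using A by blast
  fix u v assume "u \<in> f ` X" "v \<in> f ` X"
  then obtain p q where pq: "p\<in>X" "q\<in>X" "u = f p" "v = f q" by blast
  then obtain c where "c\<in>X" "le p c" "le q c" using A by blast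
  then show "\<exists>c\<in>f ` X. ileq combQ u c \<and> ileq combQ v c" using A pq by blast
qed

end

locale cjsl = jsl +
  fixes G
  assumes G_sub: "G \<subseteq> Phi" and eG: "e\<in>G" and combG: "a\<in>G \<Longrightarrow> b\<in>G \<Longrightarrow> comb a b \<in> G"
  and Gsup: "X \<subseteq> G \<Longrightarrow> idirected comb X \<Longrightarrow> \<exists>s. is_isup Phi comb X s"
  and approx: "p\<in>Phi \<Longrightarrow> is_isup Phi comb {a\<in>G. wb a p} p"
begin

lemma GP: "a \<in> G \<Longrightarrow> a \<in> Phi" using G_sub by blast

lemma approx_dir: "p\<in>Phi \<Longrightarrow> idirected comb {a\<in>G. wb a p}"
  unfolding idirected_def
proof (intro conjI ballI)
  assume "p\<in>Phi" show "{a \<in> G. wb a p} \<noteq> {}" using eG wb_e by blast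
next
  fix a b assume p: "p\<in>Phi" and a: "a \<in> {a \<in> G. wb a p}" and b: "b \<in> {a \<in> G. wb a p}"
  have aP: "a\<in>Phi" "b\<in>Phi" "a\<in>G" "b\<in>G" "wb a p" "wb b p" using a b GP by auto
  have "comb a b \<in> {a \<in> G. wb a p}" using combG[OF aP(3,4)] wb_comb[OF aP(1,2,5,6)] by blast
  then show "\<exists>c\<in>{a \<in> G. wb a p}. le a c \<and> le b c" using le_comb1[OF aP(1,2)] le_comb2[OF aP(1,2)] by blast
qed

lemma dcpo: assumes Y: "Y \<subseteq> Phi" "idirected comb Y" shows "\<exists>s. is_isup Phi comb Y s"
proof -
  define Z where "Z = {c\<in>G. \<exists>y\<in>Y. wb c y}"
  have ZG: "Z \<subseteq> G" unfolding Z_def by blast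
  have "idirected comb Z" unfolding idirected_def
  proof (intro conjI ballI)
    obtain y where "y\<in>Y" using Y(2) unfolding idirected_def by blast
    then show "Z \<noteq> {}" unfolding Z_def using eG wb_e by blast
  next
    fix c1 c2 assume c1: "c1\<in>Z" and c2: "c2\<in>Z"
    then obtain y1 y2 where y: "y1\<in>Y" "wb c1 y1" "y2\<in>Y" "wb c2 y2" "c1\<in>G" "c2\<in>G" unfolding Z_def by blast
    then obtain y where yy: "y\<in>Y" "le y1 y" "le y2 y" using Y(2) unfolding idirected_def by blast
    have yP: "y\<in>Phi" "y1\<in>Phi" "y2\<in>Phi" using y yy Y(1) by blast+
    have cP: "c1\<in>Phi" "c2\<in>Phi" using y GP by blast+
    have "wb c1 y" using wb_mono_right[OF yP(2) yP(1) y(2) yy(2)] .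
    moreover have "wb c2 y" using wb_mono_right[OF yP(3) yP(1) y(4) yy(3)] .
    ultimately have "wb (comb c1 c2) y" using wb_comb[OF cP] by blast
    then have "comb c1 c2 \<in> Z" unfolding Z_def using combG[OF y(5,6)] yy(1) by blast
    then show "\<exists>c\<in>Z. le c1 c \<and> le c2 c" using le_comb1[OF cP] le_comb2[OF cP] by blast
  qed
  then obtain s where s: "is_isup Phi comb Z s" using Gsup ZG by blast
  have sP: "s\<in>Phi" using s isup_in by blast
  have "is_isup Phi comb Y s" unfolding is_isup_def
  proof (intro conjI ballI impI)
    show "s\<in>Phi" by (fact sP)
  next
    fix y assume y: "y\<in>Y"
    have 1: "\<forall>a\<in>{a\<in>G. wb a y}. le a s" using s y unfolding is_isup_def Z_def by blast
    have 2: "y \<in> Phi" using y Y(1) by blast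
    show "le y s" using approx[OF 2] sP 1 unfolding is_isup_def by blast
  next
    fix u assume u: "u\<in>Phi" "\<forall>a\<in>Y. le a u"
    have "\<forall>c\<in>Z. le c u"
    proof
      fix c assume "c\<in>Z"
      then obtain y where y: "c\<in>G" "y\<in>Y" "wb c y" unfolding Z_def by blast
      have yP: "y\<in>Phi" using y Y(1) by blast
      show "le c u" using le_trans[OF GP[OF y(1)] yP u(1) wb_le[OF yP y(3)]] u(2) y(2) by blast
    qed
    then show "le s u" using s u(1) unfolding is_isup_def by blast
  qed
  then show ?thesis by blast
qed

lemma interp: assumes a: "a\<in>Phi" and p: "p\<in>Phi" and w: "wb a p" shows "\<exists>d\<in>Phi. wb a d \<and> wb d p"
proof -
  define X where "X = {c\<in>G. \<exists>d\<in>G. wb d p \<and> wb c d}"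
  have XP: "X \<subseteq> Phi" unfolding X_def using G_sub by blast
  have "idirected comb X" unfolding idirected_def
  proof (intro conjI ballI)
    show "X \<noteq> {}" unfolding X_def using eG wb_e by blast
  next
    fix c1 c2 assume c1: "c1\<in>X" and c2: "c2\<in>X"
    then obtain d1 d2 where d: "d1\<in>G" "wb d1 p" "wb c1 d1" "d2\<in>G" "wb d2 p" "wb c2 d2" "c1\<in>G" "c2\<in>G"
      unfolding X_def by blast
    have dP: "d1\<in>Phi" "d2\<in>Phi" "c1\<in>Phi" "c2\<in>Phi" using d GP by blast+
    have dd: "comb d1 d2 \<in> G" "wb (comb d1 d2) p" using combG[OF d(1,4)] wb_comb[OF dP(1,2) d(2,5)] by blast+
    have ddP: "comb d1 d2 \<in> Phi" using cl dP by blast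
    have "wb c1 (comb d1 d2)" using wb_mono_right[OF dP(1) ddP d(3) le_comb1[OF dP(1,2)]] .
    moreover have "wb c2 (comb d1 d2)" using wb_mono_right[OF dP(2) ddP d(6) le_comb2[OF dP(1,2)]] .
    ultimately have "wb (comb c1 c2) (comb d1 d2)" using wb_comb[OF dP(3,4)] by blast
    then have "comb c1 c2 \<in> X" unfolding X_def using dd combG[OF d(7,8)] by blast
    then show "\<exists>c\<in>X. le c1 c \<and> le c2 c" using le_comb1[OF dP(3,4)] le_comb2[OF dP(3,4)] by blast
  qed
  moreover have "is_isup Phi comb X p" unfolding is_isup_def
  proof (intro conjI ballI impI)
    show "p\<in>Phi" by fact
  next
    fix c assume "c\<in>X"
    then obtain d where d: "d\<in>G" "wb d p" "wb c d" "c\<in>G" unfolding X_def by blast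
    show "le c p" using le_trans[OF GP[OF d(4)] GP[OF d(1)] p wb_le[OF GP[OF d(1)] d(3)] wb_le[OF p d(2)]] .
  next
    fix u assume u: "u\<in>Phi" "\<forall>c\<in>X. le c u"
    have "\<forall>d\<in>{d\<in>G. wb d p}. le d u"
    proof
      fix d assume d: "d\<in>{d\<in>G. wb d p}"
      then have 1: "\<forall>c\<in>{c\<in>G. wb c d}. le c u" using u unfolding X_def by blast
      have 2: "d \<in> Phi" using d GP by blast
      show "le d u" using approx[OF 2] 1 u(1) unfolding is_isup_def by blast
    qed
    then show "le p u" using approx[OF p] u(1) unfolding is_isup_def by blast
  qed
  ultimately obtain c where c: "c\<in>X" "le a c"
    using w XP le_refl[OF p] unfolding way_below_def by blast
  then obtain d where d: "d\<in>G" "wb d p" "wb c d" "c\<in>G" unfolding X_def by blast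
  have "wb a d" using wb_mono_left[OF a GP[OF d(4)] c(2) d(3)] .
  then show ?thesis using d GP by blast
qed

lemma wb_open: assumes X: "X \<subseteq> Phi" "idirected comb X" "is_isup Phi comb X s" and w: "wb a s" and a: "a \<in> Phi"
  shows "\<exists>x\<in>X. wb a x"
proof -
  have s: "s\<in>Phi" using X isup_in by blast
  obtain d where d: "d\<in>Phi" "wb a d" "wb d s" using interp[OF a s w] by blast
  then obtain x where x: "x\<in>X" "le d x" using X le_refl[OF s] unfolding way_below_def by blast
  have "x \<in> Phi" using x X by blast
  then show ?thesis using wb_mono_right[OF d(1) _ d(2) x(2)] x(1) by blast
qed

end



definition scont :: "'a set \<Rightarrow> ('a \<Rightarrow> 'a \<Rightarrow> 'a) \<Rightarrow> 'b set \<Rightarrow> ('b \<Rightarrow> 'b \<Rightarrow> 'b) \<Rightarrow> ('a \<Rightarrow> 'b) \<Rightarrow> bool" where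
  "scont Phi combP Psi combQ f \<longleftrightarrow> (\<forall>X s. X \<subseteq> Phi \<longrightarrow> idirected combP X \<longrightarrow> is_isup Phi combP X s \<longrightarrow>
        is_isup Psi combQ (f ` X) (f s))"

lemma cont_maps_iff: "f \<in> cont_maps Phi combP Psi combQ \<longleftrightarrow>
  (\<forall>p\<in>Phi. f p \<in> Psi) \<and> (\<forall>p. p \<notin> Phi \<longrightarrow> f p = undefined) \<and> scont Phi combP Psi combQ f"
  unfolding cont_maps_def scont_def by blast

lemma scontD: "scont Phi combP Psi combQ f \<Longrightarrow> X \<subseteq> Phi \<Longrightarrow> idirected combP X \<Longrightarrow> is_isup Phi combP X s \<Longrightarrow>
        is_isup Psi combQ (f ` X) (f s)"
  unfolding scont_def by blast

lemma scont_mono: assumes J: "jsl Phi combP eP" and f: "scont Phi combP Psi combQ f"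
  and pq: "p\<in>Phi" "q\<in>Phi" "ileq combP p q" shows "ileq combQ (f p) (f q)"
proof -
  have "is_isup Psi combQ (f ` {p,q}) (f q)"
    using scontD[OF f _ jsl.pair_dir[OF J pq] jsl.pair_sup[OF J pq]] pq by blast
  then show ?thesis unfolding is_isup_def by blast
qed

lemma dfia_jsl: assumes "dfia Phi comb e foc" shows "jsl Phi comb e"
proof -
  note A = assms[unfolded dfia_def]
  show ?thesis
  proof
    fix a b c assume "a\<in>Phi" "b\<in>Phi" "c\<in>Phi"
    then show "comb a b \<in> Phi" "comb (comb a b) c = comb a (comb b c)" "comb a b = comb b a"
      using A by blast+
  next
    show "e\<in>Phi" using A by blast
  next
    fix a assume a: "a\<in>Phi"
    then show "comb a e = a" using A by blast
    obtain x where "foc a x = a" using A a by blast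
    then show "comb a a = a" using A a by metis
  qed
qed

lemma foc_in: "dfia Phi comb e foc \<Longrightarrow> a\<in>Phi \<Longrightarrow> foc a x \<in> Phi"
  unfolding dfia_def by blast

lemma foc_le: assumes "dfia Phi comb e foc" "a\<in>Phi" shows "ileq comb (foc a x) a"
proof -
  have "comb a (foc a x) = a" "foc a x \<in> Phi" using assms unfolding dfia_def by blast+
  moreover have "comb (foc a x) a = comb a (foc a x)" using assms calculation(2) unfolding dfia_def by blast
  ultimately show ?thesis unfolding ileq_def by simp
qed

lemma foc_mono: assumes D: "dfia Phi comb e foc" and ab: "a\<in>Phi" "b\<in>Phi" "ileq comb a b"
  shows "ileq comb (foc a x) (foc b x)"
proof -
  interpret jsl Phi comb e using dfia_jsl[OF D] .
  have fa: "foc a x \<in> Phi" using foc_in[OF D ab(1)] .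
  have "ileq comb (foc a x) b" using le_trans[OF fa ab(1) ab(2) foc_le[OF D ab(1)] ab(3)] .
  then have 1: "comb (foc a x) b = b" unfolding ileq_def .
  have "foc (comb (foc a x) b) x = comb (foc a x) (foc b x)" using D ab unfolding dfia_def by blast
  then show ?thesis unfolding ileq_def using 1 by simp
qed

lemma foc_top: assumes D: "dfia Phi comb e foc" and t: "\<forall>x. x \<le> t" and a: "a\<in>Phi"
  shows "foc a t = a"
proof -
  obtain x0 where x0: "foc a x0 = a" using D a unfolding dfia_def by blast
  have "foc a t = foc (foc a x0) t" using x0 by simp
  also have "\<dots> = foc a (inf t x0)" using D a unfolding dfia_def by blast
  also have "inf t x0 = x0" using t by (simp add: inf_absorb2)
  finally show ?thesis using x0 by simp
qed

lemma s_cont_cjsl: assumes S: "s_continuous_ia Phi comb e (foc :: 'a \<Rightarrow> 'd::lattice \<Rightarrow> 'a)"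
  shows "\<exists>G. cjsl Phi comb e G"
proof -
  have D: "dfia Phi comb e foc" using S unfolding s_continuous_ia_def by blast
  interpret jsl Phi comb e using dfia_jsl[OF D] .
  obtain t :: 'd where t: "\<forall>x. x \<le> t" using S unfolding s_continuous_ia_def by blast
  obtain G where G: "basis_ok Phi comb e G"
    "\<forall>p\<in>Phi. \<forall>x. is_isup Phi comb {a\<in>G. foc a x = a \<and> wb a p} (foc p x)"
    using S unfolding s_continuous_ia_def by blast
  have GP: "G \<subseteq> Phi" using G unfolding basis_ok_def by blast
  have "cjsl Phi comb e G"
  proof (unfold_locales)
    show "G \<subseteq> Phi" "e\<in>G" using G unfolding basis_ok_def by blast+
    show "\<And>a b. a \<in> G \<Longrightarrow> b \<in> G \<Longrightarrow> comb a b \<in> G" using G unfolding basis_ok_def by blast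
    show "\<And>X. X \<subseteq> G \<Longrightarrow> idirected comb X \<Longrightarrow> \<exists>s. is_isup Phi comb X s" using G unfolding basis_ok_def by blast
  next
    fix p assume p: "p\<in>Phi"
    have 1: "is_isup Phi comb {a\<in>G. foc a t = a \<and> wb a p} (foc p t)" using G p by blast
    have "{a\<in>G. foc a t = a \<and> wb a p} = {a\<in>G. wb a p}" using foc_top[OF D t] GP by blast
    moreover have "foc p t = p" using foc_top[OF D t p] .
    ultimately show "is_isup Phi comb {a\<in>G. wb a p} p" using 1 by simp
  qed
  then show ?thesis by blast
qed

lemma foc_scont: assumes S: "s_continuous_ia Phi comb e (foc :: 'a \<Rightarrow> 'd::lattice \<Rightarrow> 'a)"
  shows "scont Phi comb Phi comb (\<lambda>a. foc a x)"
  unfolding scont_def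
proof (intro allI impI)
  fix X s assume X: "X \<subseteq> Phi" "idirected comb X" "is_isup Phi comb X s"
  have D: "dfia Phi comb e foc" using S unfolding s_continuous_ia_def by blast
  interpret jsl Phi comb e using dfia_jsl[OF D] .
  obtain G where G: "basis_ok Phi comb e G"
    "\<forall>p\<in>Phi. \<forall>x. is_isup Phi comb {a\<in>G. foc a x = a \<and> wb a p} (foc p x)"
    using S unfolding s_continuous_ia_def by blast
  have GP: "G \<subseteq> Phi" using G unfolding basis_ok_def by blast
  have sP: "s\<in>Phi" using X isup_in by blast
  have A: "is_isup Phi comb {a\<in>G. foc a x = a \<and> wb a s} (foc s x)" using G sP by blast
  show "is_isup Phi comb ((\<lambda>a. foc a x) ` X) (foc s x)" unfolding is_isup_def
  proof (intro conjI ballI impI)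
    show "foc s x \<in> Phi" using foc_in[OF D sP] .
  next
    fix b assume "b \<in> (\<lambda>a. foc a x) ` X"
    then obtain c where c: "c\<in>X" "b = foc c x" by blast
    have "ileq comb c s" using X c unfolding is_isup_def by blast
    then show "ileq comb b (foc s x)" using foc_mono[OF D _ sP] c X by blast
  next
    fix u assume u: "u\<in>Phi" "\<forall>b\<in>(\<lambda>a. foc a x) ` X. ileq comb b u"
    have "\<forall>a\<in>{a\<in>G. foc a x = a \<and> wb a s}. ileq comb a u"
    proof
      fix a assume a: "a\<in>{a\<in>G. foc a x = a \<and> wb a s}"
      have aP: "a\<in>Phi" using a GP by blast
      obtain c where c: "c\<in>X" "ileq comb a c"
        using a X le_refl[OF sP] unfolding way_below_def by blast
      have cP: "c\<in>Phi" using c X by blast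
      have "ileq comb (foc a x) (foc c x)" using foc_mono[OF D aP cP c(2)] .
      moreover have "ileq comb (foc c x) u" using u c by blast
      ultimately have "ileq comb (foc a x) u" using le_trans[OF foc_in[OF D aP] foc_in[OF D cP] u(1)] by blast
      then show "ileq comb a u" using a by simp
    qed
    then show "ileq comb (foc s x) u" using A u(1) unfolding is_isup_def by blast
  qed
qed



lemma leF: assumes g: "g \<in> cont_maps Phi combP Psi combQ"
  shows "ileq (fun_comb Phi combQ) f g \<longleftrightarrow> (\<forall>p\<in>Phi. ileq combQ (f p) (g p))"
proof
  assume "ileq (fun_comb Phi combQ) f g"
  then have "\<forall>p. fun_comb Phi combQ f g p = g p" unfolding ileq_def by simp
  then show "\<forall>p\<in>Phi. ileq combQ (f p) (g p)" unfolding ileq_def fun_comb_def by (metis (full_types))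
next
  assume A: "\<forall>p\<in>Phi. ileq combQ (f p) (g p)"
  have "fun_comb Phi combQ f g = g"
  proof
    fix p show "fun_comb Phi combQ f g p = g p"
      using A g unfolding fun_comb_def ileq_def cont_maps_iff by auto
  qed
  then show "ileq (fun_comb Phi combQ) f g" unfolding ileq_def .
qed

lemma F_comb_in: assumes JP: "jsl Phi combP eP" and JQ: "jsl Psi combQ eQ"
  and f: "f \<in> cont_maps Phi combP Psi combQ" and g: "g \<in> cont_maps Phi combP Psi combQ"
  shows "fun_comb Phi combQ f g \<in> cont_maps Phi combP Psi combQ"
proof -
  interpret Q: jsl Psi combQ eQ by (fact JQ)
  have fv: "\<forall>p\<in>Phi. f p \<in> Psi" "scont Phi combP Psi combQ f" and gv: "\<forall>p\<in>Phi. g p \<in> Psi" "scont Phi combP Psi combQ g"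
    using f g unfolding cont_maps_iff by blast+
  have "scont Phi combP Psi combQ (fun_comb Phi combQ f g)"
    unfolding scont_def
  proof (intro allI impI)
    fix X s assume X: "X \<subseteq> Phi" "idirected combP X" "is_isup Phi combP X s"
    have sP: "s \<in> Phi" using X unfolding is_isup_def by blast
    have fs: "is_isup Psi combQ (f ` X) (f s)" using scontD[OF fv(2) X] .
    have gs: "is_isup Psi combQ (g ` X) (g s)" using scontD[OF gv(2) X] .
    have fsP: "f s \<in> Psi" "g s \<in> Psi" using fv gv sP by blast+
    have img: "fun_comb Phi combQ f g ` X = (\<lambda>p. combQ (f p) (g p)) ` X"
      using X(1) unfolding fun_comb_def by auto
    have val: "fun_comb Phi combQ f g s = combQ (f s) (g s)" using sP unfolding fun_comb_def by simp
    show "is_isup Psi combQ (fun_comb Phi combQ f g ` X) (fun_comb Phi combQ f g s)"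
      unfolding img val is_isup_def
    proof (intro conjI ballI impI)
      show "combQ (f s) (g s) \<in> Psi" using Q.cl fsP by blast
    next
      fix b assume "b \<in> (\<lambda>p. combQ (f p) (g p)) ` X"
      then obtain p where p: "p\<in>X" "b = combQ (f p) (g p)" by blast
      have pv: "f p \<in> Psi" "g p \<in> Psi" using p X fv gv by blast+
      have "ileq combQ (f p) (f s)" "ileq combQ (g p) (g s)" using fs gs p unfolding is_isup_def by blast+
      then show "ileq combQ b (combQ (f s) (g s))" using Q.comb_mono[OF pv fsP] p by blast
    next
      fix u assume u: "u \<in> Psi" "\<forall>b\<in>(\<lambda>p. combQ (f p) (g p)) ` X. ileq combQ b u"
      have "\<forall>b\<in>f ` X. ileq combQ b u"
      proof
        fix b assume "b \<in> f ` X" then obtain p where p: "p\<in>X" "b = f p" by blast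
        have pv: "f p \<in> Psi" "g p \<in> Psi" using p X fv gv by blast+
        show "ileq combQ b u" using Q.le_trans[OF pv(1) Q.cl[OF pv] u(1) Q.le_comb1[OF pv]] u p by blast
      qed
      then have 1: "ileq combQ (f s) u" using fs u(1) unfolding is_isup_def by blast
      have "\<forall>b\<in>g ` X. ileq combQ b u"
      proof
        fix b assume "b \<in> g ` X" then obtain p where p: "p\<in>X" "b = g p" by blast
        have pv: "f p \<in> Psi" "g p \<in> Psi" using p X fv gv by blast+
        show "ileq combQ b u" using Q.le_trans[OF pv(2) Q.cl[OF pv] u(1) Q.le_comb2[OF pv]] u p by blast
      qed
      then have 2: "ileq combQ (g s) u" using gs u(1) unfolding is_isup_def by blast
      show "ileq combQ (combQ (f s) (g s)) u" using Q.comb_least[OF fsP u(1) 1 2] .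
    qed
  qed
  moreover have "\<forall>p\<in>Phi. fun_comb Phi combQ f g p \<in> Psi" using fv gv Q.cl unfolding fun_comb_def by simp
  moreover have "\<forall>p. p \<notin> Phi \<longrightarrow> fun_comb Phi combQ f g p = undefined" unfolding fun_comb_def by simp
  ultimately show ?thesis unfolding cont_maps_iff by blast
qed

lemma F_e_in: assumes JQ: "jsl Psi combQ eQ"
  shows "fun_neutral Phi eQ \<in> cont_maps Phi combP Psi combQ"
proof -
  interpret Q: jsl Psi combQ eQ by (fact JQ)
  have "scont Phi combP Psi combQ (fun_neutral Phi eQ)"
    unfolding scont_def
  proof (intro allI impI)
    fix X s assume X: "X \<subseteq> Phi" "idirected combP X" "is_isup Phi combP X s"
    have sP: "s \<in> Phi" using X unfolding is_isup_def by blast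
    have "X \<noteq> {}" using X unfolding idirected_def by blast
    then have "fun_neutral Phi eQ ` X = {eQ}" using X(1) unfolding fun_neutral_def by auto
    moreover have "fun_neutral Phi eQ s = eQ" using sP unfolding fun_neutral_def by simp
    ultimately show "is_isup Psi combQ (fun_neutral Phi eQ ` X) (fun_neutral Phi eQ s)"
      using Q.single_sup[OF Q.e_in] by simp
  qed
  then show ?thesis unfolding cont_maps_iff fun_neutral_def using Q.e_in by simp
qed

lemma F_foc_in: assumes SP: "s_continuous_ia Phi combP eP (focP :: 'a \<Rightarrow> 'd::lattice \<Rightarrow> 'a)"
  and SQ: "s_continuous_ia Psi combQ eQ (focQ :: 'b \<Rightarrow> 'e::lattice \<Rightarrow> 'b)"
  and f: "f \<in> cont_maps Phi combP Psi combQ"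
  shows "fun_foc Phi focP focQ f (x,y) \<in> cont_maps Phi combP Psi combQ"
proof -
  have DP: "dfia Phi combP eP focP" using SP unfolding s_continuous_ia_def by blast
  have DQ: "dfia Psi combQ eQ focQ" using SQ unfolding s_continuous_ia_def by blast
  interpret P: jsl Phi combP eP using dfia_jsl[OF DP] .
  interpret Q: jsl Psi combQ eQ using dfia_jsl[OF DQ] .
  have fv: "\<forall>p\<in>Phi. f p \<in> Psi" "scont Phi combP Psi combQ f" using f unfolding cont_maps_iff by blast+
  have "scont Phi combP Psi combQ (fun_foc Phi focP focQ f (x,y))"
    unfolding scont_def
  proof (intro allI impI)
    fix X s assume X: "X \<subseteq> Phi" "idirected combP X" "is_isup Phi combP X s"
    have sP: "s \<in> Phi" using X unfolding is_isup_def by blast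
    define X1 where "X1 = (\<lambda>a. focP a x) ` X"
    have X1: "X1 \<subseteq> Phi" "idirected combP X1" "is_isup Phi combP X1 (focP s x)"
      unfolding X1_def
      using X foc_in[OF DP] apply blast
       apply (rule P.mono_dir[OF X(1,2)]) using foc_mono[OF DP] apply blast
      using scontD[OF foc_scont[OF SP] X] .
    define X2 where "X2 = f ` X1"
    have X2: "X2 \<subseteq> Psi" "idirected combQ X2" "is_isup Psi combQ X2 (f (focP s x))"
      unfolding X2_def
      using X1 fv apply blast
       apply (rule P.mono_dir[OF X1(1,2)]) using scont_mono[OF dfia_jsl[OF DP] fv(2)] apply blast
      using scontD[OF fv(2) X1] .
    have 3: "is_isup Psi combQ ((\<lambda>b. focQ b y) ` X2) (focQ (f (focP s x)) y)"
      using scontD[OF foc_scont[OF SQ] X2] .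
    have img: "fun_foc Phi focP focQ f (x,y) ` X = (\<lambda>b. focQ b y) ` X2"
      unfolding X2_def X1_def fun_foc_def using X(1) by (auto simp: image_image)
    have val: "fun_foc Phi focP focQ f (x,y) s = focQ (f (focP s x)) y"
      unfolding fun_foc_def using sP by simp
    show "is_isup Psi combQ (fun_foc Phi focP focQ f (x, y) ` X) (fun_foc Phi focP focQ f (x, y) s)"
      unfolding img val by (fact 3)
  qed
  moreover have "\<forall>p\<in>Phi. fun_foc Phi focP focQ f (x,y) p \<in> Psi"
    unfolding fun_foc_def using fv foc_in[OF DP] foc_in[OF DQ] by simp
  moreover have "\<forall>p. p \<notin> Phi \<longrightarrow> fun_foc Phi focP focQ f (x,y) p = undefined" unfolding fun_foc_def by simp
  ultimately show ?thesis unfolding cont_maps_iff by blast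
qed



lemma F_dfia: assumes SP: "s_continuous_ia Phi combP eP (focP :: 'a \<Rightarrow> 'd::lattice \<Rightarrow> 'a)"
  and SQ: "s_continuous_ia Psi combQ eQ (focQ :: 'b \<Rightarrow> 'e::lattice \<Rightarrow> 'b)"
  shows "dfia (cont_maps Phi combP Psi combQ) (fun_comb Phi combQ) (fun_neutral Phi eQ) (fun_foc Phi focP focQ)"
proof -
  have DP: "dfia Phi combP eP focP" using SP unfolding s_continuous_ia_def by blast
  have DQ: "dfia Psi combQ eQ focQ" using SQ unfolding s_continuous_ia_def by blast
  interpret P: jsl Phi combP eP using dfia_jsl[OF DP] .
  interpret Q: jsl Psi combQ eQ using dfia_jsl[OF DQ] .
  obtain tP :: 'd where tP: "\<forall>x. x \<le> tP" using SP unfolding s_continuous_ia_def by blast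
  obtain tQ :: 'e where tQ: "\<forall>x. x \<le> tQ" using SQ unfolding s_continuous_ia_def by blast
  have Pff: "\<And>a x y. a\<in>Phi \<Longrightarrow> focP (focP a y) x = focP a (inf x y)" using DP unfolding dfia_def by blast
  have Qff: "\<And>a x y. a\<in>Psi \<Longrightarrow> focQ (focQ a y) x = focQ a (inf x y)" using DQ unfolding dfia_def by blast
  have Qcomb: "\<And>a b x. a\<in>Psi \<Longrightarrow> b\<in>Psi \<Longrightarrow> focQ (combQ (focQ a x) b) x = combQ (focQ a x) (focQ b x)"
    using DQ unfolding dfia_def by blast
  have Pin: "\<And>a x. a\<in>Phi \<Longrightarrow> focP a x \<in> Phi" using foc_in[OF DP] .
  have Qin: "\<And>a x. a\<in>Psi \<Longrightarrow> focQ a x \<in> Psi" using foc_in[OF DQ] .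
  let ?F = "cont_maps Phi combP Psi combQ"
  have Fv: "\<And>f p. f \<in> ?F \<Longrightarrow> p \<in> Phi \<Longrightarrow> f p \<in> Psi" unfolding cont_maps_iff by blast
  have Fu: "\<And>f p. f \<in> ?F \<Longrightarrow> p \<notin> Phi \<Longrightarrow> f p = undefined" unfolding cont_maps_iff by blast
  have focin: "\<forall>a\<in>?F. \<forall>x. fun_foc Phi focP focQ a x \<in> ?F"
    using F_foc_in[OF SP SQ] by (metis prod.collapse)
  show ?thesis unfolding dfia_def
  proof (intro conjI)
    show "\<forall>a\<in>?F. \<forall>b\<in>?F. fun_comb Phi combQ a b \<in> ?F" using F_comb_in[OF dfia_jsl[OF DP] dfia_jsl[OF DQ]] by blast
    show "fun_neutral Phi eQ \<in> ?F" using F_e_in[OF dfia_jsl[OF DQ]] .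
    show "\<forall>a\<in>?F. \<forall>x. fun_foc Phi focP focQ a x \<in> ?F" by (fact focin)
    show "\<forall>a\<in>?F. \<forall>b\<in>?F. \<forall>c\<in>?F. fun_comb Phi combQ (fun_comb Phi combQ a b) c = fun_comb Phi combQ a (fun_comb Phi combQ b c)"
      unfolding fun_comb_def using Fv Q.assoc by auto
    show "\<forall>a\<in>?F. \<forall>b\<in>?F. fun_comb Phi combQ a b = fun_comb Phi combQ b a"
      unfolding fun_comb_def using Fv Q.commute by auto
    show "\<forall>a\<in>?F. fun_comb Phi combQ a (fun_neutral Phi eQ) = a"
    proof
      fix a assume a: "a\<in>?F"
      show "fun_comb Phi combQ a (fun_neutral Phi eQ) = a"
        unfolding fun_comb_def fun_neutral_def using Fv[OF a] Fu[OF a] Q.neut by auto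
    qed
    show "\<forall>a\<in>?F. \<forall>x y. fun_foc Phi focP focQ (fun_foc Phi focP focQ a y) x = fun_foc Phi focP focQ a (inf x y)"
    proof (intro ballI allI)
      fix a and x y :: "'d \<times> 'e" assume a: "a\<in>?F"
      obtain x1 x2 where x: "x = (x1,x2)" by (cases x)
      obtain y1 y2 where y: "y = (y1,y2)" by (cases y)
      show "fun_foc Phi focP focQ (fun_foc Phi focP focQ a y) x = fun_foc Phi focP focQ a (inf x y)"
      proof
        fix p show "fun_foc Phi focP focQ (fun_foc Phi focP focQ a y) x p = fun_foc Phi focP focQ a (inf x y) p"
        proof (cases "p\<in>Phi")
          case True
          have 1: "focP p x1 \<in> Phi" using Pin True by blast
          have 2: "focP (focP p x1) y1 = focP p (inf x1 y1)" using Pff[OF True] by (simp add: inf.commute)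
          have 3: "a (focP p (inf x1 y1)) \<in> Psi" using Fv[OF a] Pin[OF True] by blast
          show ?thesis unfolding fun_foc_def x y using True 1 2 Qff[OF 3] by simp
        next
          case False then show ?thesis unfolding fun_foc_def by simp
        qed
      qed
    qed
    show "\<forall>a\<in>?F. \<forall>b\<in>?F. \<forall>x. fun_foc Phi focP focQ (fun_comb Phi combQ (fun_foc Phi focP focQ a x) b) x =
          fun_comb Phi combQ (fun_foc Phi focP focQ a x) (fun_foc Phi focP focQ b x)"
    proof (intro ballI allI)
      fix a b and x :: "'d \<times> 'e" assume a: "a\<in>?F" and b: "b\<in>?F"
      obtain x1 x2 where x: "x = (x1,x2)" by (cases x)
      show "fun_foc Phi focP focQ (fun_comb Phi combQ (fun_foc Phi focP focQ a x) b) x =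
          fun_comb Phi combQ (fun_foc Phi focP focQ a x) (fun_foc Phi focP focQ b x)"
      proof
        fix p show "fun_foc Phi focP focQ (fun_comb Phi combQ (fun_foc Phi focP focQ a x) b) x p =
          fun_comb Phi combQ (fun_foc Phi focP focQ a x) (fun_foc Phi focP focQ b x) p"
        proof (cases "p\<in>Phi")
          case True
          have 1: "focP p x1 \<in> Phi" using Pin True by blast
          have 2: "focP (focP p x1) x1 = focP p x1" using Pff[OF True] by simp
          have 3: "a (focP p x1) \<in> Psi" "b (focP p x1) \<in> Psi" using Fv[OF a 1] Fv[OF b 1] by blast+
          show ?thesis unfolding fun_foc_def fun_comb_def x using True 1 2 Qcomb[OF 3] by simp
        next
          case False then show ?thesis unfolding fun_foc_def fun_comb_def by simp
        qed
      qed
    qed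
    show "\<forall>a\<in>?F. \<exists>x. fun_foc Phi focP focQ a x = a"
    proof
      fix a assume a: "a\<in>?F"
      have "fun_foc Phi focP focQ a (tP,tQ) = a"
      proof
        fix p show "fun_foc Phi focP focQ a (tP, tQ) p = a p"
          unfolding fun_foc_def using foc_top[OF DP tP] foc_top[OF DQ tQ] Fv[OF a] Fu[OF a] by auto
      qed
      then show "\<exists>x. fun_foc Phi focP focQ a x = a" by blast
    qed
    show "\<forall>a\<in>?F. \<forall>x. fun_comb Phi combQ a (fun_foc Phi focP focQ a x) = a"
    proof (intro ballI allI)
      fix a and x :: "'d \<times> 'e" assume a: "a\<in>?F"
      obtain x1 x2 where x: "x = (x1,x2)" by (cases x)
      have as: "scont Phi combP Psi combQ a" using a unfolding cont_maps_iff by blast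
      show "fun_comb Phi combQ a (fun_foc Phi focP focQ a x) = a"
      proof
        fix p show "fun_comb Phi combQ a (fun_foc Phi focP focQ a x) p = a p"
        proof (cases "p\<in>Phi")
          case True
          have 1: "focP p x1 \<in> Phi" using Pin True by blast
          have 2: "ileq combP (focP p x1) p" using foc_le[OF DP True] .
          have 3: "ileq combQ (a (focP p x1)) (a p)" using scont_mono[OF dfia_jsl[OF DP] as 1 True 2] .
          have 4: "a (focP p x1) \<in> Psi" "a p \<in> Psi" using Fv[OF a] 1 True by blast+
          have 5: "ileq combQ (focQ (a (focP p x1)) x2) (a (focP p x1))" using foc_le[OF DQ 4(1)] .
          have "ileq combQ (focQ (a (focP p x1)) x2) (a p)" using Q.le_trans[OF Qin[OF 4(1)] 4 5 3] .
          then have "combQ (a p) (focQ (a (focP p x1)) x2) = a p"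
            unfolding ileq_def using Q.commute[OF 4(2) Qin[OF 4(1)]] by simp
          then show ?thesis unfolding fun_comb_def fun_foc_def x using True by simp
        next
          case False then show ?thesis unfolding fun_comb_def using Fu[OF a] by simp
        qed
      qed
    qed
  qed
qed



lemma F_pt_dir: assumes X: "X \<subseteq> cont_maps Phi combP Psi combQ" "idirected (fun_comb Phi combQ) X"
  and p: "p \<in> Phi"
  shows "(\<lambda>g. g p) ` X \<subseteq> Psi" "idirected combQ ((\<lambda>g. g p) ` X)"
proof -
  show "(\<lambda>g. g p) ` X \<subseteq> Psi" using X(1) p by (auto simp: cont_maps_iff)
  show "idirected combQ ((\<lambda>g. g p) ` X)" unfolding idirected_def
  proof (intro conjI ballI)
    show "(\<lambda>g. g p) ` X \<noteq> {}" using X(2) unfolding idirected_def by blast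
  next
    fix u v assume "u \<in> (\<lambda>g. g p) ` X" "v \<in> (\<lambda>g. g p) ` X"
    then obtain g1 g2 where g: "g1\<in>X" "g2\<in>X" "u = g1 p" "v = g2 p" by blast
    then obtain g where gg: "g\<in>X" "ileq (fun_comb Phi combQ) g1 g" "ileq (fun_comb Phi combQ) g2 g"
      using X(2) unfolding idirected_def by blast
    have "g \<in> cont_maps Phi combP Psi combQ" using gg X(1) by blast
    then have "ileq combQ u (g p)" "ileq combQ v (g p)" using leF gg g p by blast+
    then show "\<exists>c\<in>(\<lambda>g. g p) ` X. ileq combQ u c \<and> ileq combQ v c" using gg by blast
  qed
qed

lemma F_sup: assumes JP: "jsl Phi combP eP" and CQ: "cjsl Psi combQ eQ GQ"
  and X: "X \<subseteq> cont_maps Phi combP Psi combQ" "idirected (fun_comb Phi combQ) X"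
  shows "\<exists>s. is_isup (cont_maps Phi combP Psi combQ) (fun_comb Phi combQ) X s \<and>
      (\<forall>p\<in>Phi. is_isup Psi combQ ((\<lambda>g. g p) ` X) (s p))"
proof -
  interpret Q: cjsl Psi combQ eQ GQ by (fact CQ)
  let ?F = "cont_maps Phi combP Psi combQ"
  define s where "s = (\<lambda>p. if p\<in>Phi then SOME v. is_isup Psi combQ ((\<lambda>g. g p) ` X) v else undefined)"
  have hs: "\<forall>p\<in>Phi. is_isup Psi combQ ((\<lambda>g. g p) ` X) (s p)"
  proof
    fix p assume p: "p\<in>Phi"
    have "\<exists>v. is_isup Psi combQ ((\<lambda>g. g p) ` X) v" using Q.dcpo F_pt_dir[OF X p] by blast
    then show "is_isup Psi combQ ((\<lambda>g. g p) ` X) (s p)" unfolding s_def using p by (simp add: someI_ex)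
  qed
  have sv: "\<forall>p\<in>Phi. s p \<in> Psi" using hs Q.isup_in by blast
  have Xs: "\<And>g. g\<in>X \<Longrightarrow> scont Phi combP Psi combQ g" "\<And>g p. g\<in>X \<Longrightarrow> p\<in>Phi \<Longrightarrow> g p \<in> Psi"
    using X(1) by (auto simp: cont_maps_iff)
  have "scont Phi combP Psi combQ s" unfolding scont_def
  proof (intro allI impI)
    fix Y q assume Y: "Y \<subseteq> Phi" "idirected combP Y" "is_isup Phi combP Y q"
    have qP: "q\<in>Phi" using Y unfolding is_isup_def by blast
    have gq: "\<And>g. g\<in>X \<Longrightarrow> is_isup Psi combQ (g ` Y) (g q)" using scontD[OF Xs(1) Y] by blast
    show "is_isup Psi combQ (s ` Y) (s q)" unfolding is_isup_def
    proof (intro conjI ballI impI)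
      show "s q \<in> Psi" using sv qP by blast
    next
      fix v assume "v \<in> s ` Y"
      then obtain p where p: "p\<in>Y" "v = s p" by blast
      have pP: "p\<in>Phi" using p Y by blast
      have "\<forall>w\<in>(\<lambda>g. g p) ` X. ileq combQ w (s q)"
      proof
        fix w assume "w\<in>(\<lambda>g. g p) ` X"
        then obtain g where g: "g\<in>X" "w = g p" by blast
        have 1: "ileq combQ (g p) (g q)" using gq[OF g(1)] p(1) unfolding is_isup_def by blast
        have 2: "ileq combQ (g q) (s q)" using hs qP g(1) unfolding is_isup_def by blast
        show "ileq combQ w (s q)" using Q.le_trans[OF Xs(2)[OF g(1) pP] Xs(2)[OF g(1) qP] _ 1 2] sv qP g by blast
      qed
      then show "ileq combQ v (s q)" using hs pP sv qP p unfolding is_isup_def by blast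
    next
      fix u assume u: "u\<in>Psi" "\<forall>v\<in>s ` Y. ileq combQ v u"
      have "\<forall>w\<in>(\<lambda>g. g q) ` X. ileq combQ w u"
      proof
        fix w assume "w\<in>(\<lambda>g. g q) ` X"
        then obtain g where g: "g\<in>X" "w = g q" by blast
        have "\<forall>v\<in>g ` Y. ileq combQ v u"
        proof
          fix v assume "v \<in> g ` Y"
          then obtain p where p: "p\<in>Y" "v = g p" by blast
          have pP: "p\<in>Phi" using p Y by blast
          have 1: "ileq combQ (g p) (s p)" using hs pP g(1) unfolding is_isup_def by blast
          have 2: "ileq combQ (s p) u" using u p by blast
          show "ileq combQ v u" using Q.le_trans[OF Xs(2)[OF g(1) pP] _ u(1) 1 2] sv pP p by blast
        qed
        then show "ileq combQ w u" using gq[OF g(1)] u(1) g unfolding is_isup_def by blast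
      qed
      then show "ileq combQ (s q) u" using hs qP u(1) unfolding is_isup_def by blast
    qed
  qed
  then have sF: "s \<in> ?F" unfolding cont_maps_iff using sv unfolding s_def by auto
  have "is_isup ?F (fun_comb Phi combQ) X s" unfolding is_isup_def
  proof (intro conjI ballI impI)
    show "s \<in> ?F" by (fact sF)
  next
    fix g assume g: "g\<in>X"
    show "ileq (fun_comb Phi combQ) g s" unfolding leF[OF sF] using hs g unfolding is_isup_def by blast
  next
    fix u assume u: "u\<in>?F" "\<forall>g\<in>X. ileq (fun_comb Phi combQ) g u"
    have "\<forall>p\<in>Phi. ileq combQ (s p) (u p)"
    proof
      fix p assume p: "p\<in>Phi"
      have "\<forall>w\<in>(\<lambda>g. g p) ` X. ileq combQ w (u p)" using u p leF[OF u(1)] by blast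
      moreover have "u p \<in> Psi" using u p unfolding cont_maps_iff by blast
      ultimately show "ileq combQ (s p) (u p)" using hs p unfolding is_isup_def by blast
    qed
    then show "ileq (fun_comb Phi combQ) s u" using leF[OF u(1)] by blast
  qed
  then show ?thesis using hs by blast
qed



lemma step_in: assumes CP: "cjsl Phi combP eP GP" and JQ: "jsl Psi combQ eQ"
  and a: "a \<in> Phi" and b: "b \<in> Psi"
  shows "(\<lambda>q. if q\<in>Phi then (if way_below Phi combP a q then b else eQ) else undefined)
     \<in> cont_maps Phi combP Psi combQ"
proof -
  interpret P: cjsl Phi combP eP GP by (fact CP)
  interpret Q: jsl Psi combQ eQ by (fact JQ)
  define \<sigma> where "\<sigma> = (\<lambda>q. if q\<in>Phi then (if way_below Phi combP a q then b else eQ) else undefined)"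
  have "scont Phi combP Psi combQ \<sigma>" unfolding scont_def
  proof (intro allI impI)
    fix X s assume X: "X \<subseteq> Phi" "idirected combP X" "is_isup Phi combP X s"
    have sP: "s\<in>Phi" using X P.isup_in by blast
    have ne: "X \<noteq> {}" using X unfolding idirected_def by blast
    show "is_isup Psi combQ (\<sigma> ` X) (\<sigma> s)"
    proof (cases "way_below Phi combP a s")
      case True
      obtain x where x: "x\<in>X" "way_below Phi combP a x" using P.wb_open[OF X True a] by blast
      have vs: "\<sigma> s = b" unfolding \<sigma>_def using sP True by simp
      have sub: "\<sigma> ` X \<subseteq> {b, eQ}" unfolding \<sigma>_def using X(1) by auto
      have bin: "b \<in> \<sigma> ` X" using x X(1) unfolding \<sigma>_def by force
      show ?thesis unfolding vs is_isup_def
      proof (intro conjI ballI impI)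
        show "b\<in>Psi" by (fact b)
      next
        fix v assume "v \<in> \<sigma> ` X"
        then have "v = b \<or> v = eQ" using sub by blast
        then show "ileq combQ v b" using Q.le_refl[OF b] Q.e_le[OF b] by blast
      next
        fix u assume "u\<in>Psi" "\<forall>v\<in>\<sigma> ` X. ileq combQ v u"
        then show "ileq combQ b u" using bin by blast
      qed
    next
      case False
      have "\<forall>x\<in>X. \<not> way_below Phi combP a x"
      proof (intro ballI notI)
        fix x assume x: "x\<in>X" "way_below Phi combP a x"
        have "ileq combP x s" using X x unfolding is_isup_def by blast
        then have "way_below Phi combP a s" using P.wb_mono_right[OF _ sP x(2)] x X by blast
        then show False using False by blast
      qed
      then have "\<sigma> ` X = {eQ}" unfolding \<sigma>_def using X(1) ne by auto
      moreover have "\<sigma> s = eQ" unfolding \<sigma>_def using sP False by simp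
      ultimately show ?thesis using Q.single_sup[OF Q.e_in] by simp
    qed
  qed
  moreover have "\<forall>p\<in>Phi. \<sigma> p \<in> Psi" unfolding \<sigma>_def using b Q.e_in by simp
  moreover have "\<forall>p. p \<notin> Phi \<longrightarrow> \<sigma> p = undefined" unfolding \<sigma>_def by simp
  ultimately show ?thesis unfolding cont_maps_iff \<sigma>_def by blast
qed

lemma step_wb: assumes SP: "s_continuous_ia Phi combP eP (focP :: 'a \<Rightarrow> 'd::lattice \<Rightarrow> 'a)"
  and SQ: "s_continuous_ia Psi combQ eQ (focQ :: 'b \<Rightarrow> 'e::lattice \<Rightarrow> 'b)"
  and CQ: "cjsl Psi combQ eQ GQ"
  and a: "a \<in> Phi" and b: "b \<in> Psi" and f: "f \<in> cont_maps Phi combP Psi combQ"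
  and w: "way_below Psi combQ b (f a)"
  and \<sigma>F: "(\<lambda>q. if q\<in>Phi then (if way_below Phi combP a q then b else eQ) else undefined)
     \<in> cont_maps Phi combP Psi combQ"
  shows "way_below (cont_maps Phi combP Psi combQ) (fun_comb Phi combQ)
     (\<lambda>q. if q\<in>Phi then (if way_below Phi combP a q then b else eQ) else undefined) f"
proof -
  have DP: "dfia Phi combP eP focP" using SP unfolding s_continuous_ia_def by blast
  interpret P: jsl Phi combP eP using dfia_jsl[OF DP] .
  interpret Q: cjsl Psi combQ eQ GQ by (fact CQ)
  interpret F: jsl "cont_maps Phi combP Psi combQ" "fun_comb Phi combQ" "fun_neutral Phi eQ"
    using dfia_jsl[OF F_dfia[OF SP SQ]] .
  define \<sigma> where "\<sigma> = (\<lambda>q. if q\<in>Phi then (if way_below Phi combP a q then b else eQ) else undefined)"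
  have \<sigma>F': "\<sigma> \<in> cont_maps Phi combP Psi combQ" using \<sigma>F unfolding \<sigma>_def .
  show ?thesis unfolding \<sigma>_def[symmetric] way_below_def[of "cont_maps Phi combP Psi combQ"]
  proof (intro allI impI)
    fix X s assume X: "X \<subseteq> cont_maps Phi combP Psi combQ" "idirected (fun_comb Phi combQ) X"
      "is_isup (cont_maps Phi combP Psi combQ) (fun_comb Phi combQ) X s" "ileq (fun_comb Phi combQ) f s"
    obtain s' where s': "is_isup (cont_maps Phi combP Psi combQ) (fun_comb Phi combQ) X s'"
      "\<forall>p\<in>Phi. is_isup Psi combQ ((\<lambda>g. g p) ` X) (s' p)"
      using F_sup[OF dfia_jsl[OF DP] CQ X(1,2)] by blast
    have ss: "s' = s" using F.isup_unique[OF s'(1) X(3)] .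
    have sF: "s \<in> cont_maps Phi combP Psi combQ" using X(3) F.isup_in by blast
    have sa: "is_isup Psi combQ ((\<lambda>g. g a) ` X) (s a)" using s'(2) a ss by blast
    have fa: "ileq combQ (f a) (s a)" using X(4) leF[OF sF] a by blast
    have faP: "f a \<in> Psi" "s a \<in> Psi" using f sF a unfolding cont_maps_iff by blast+
    have "way_below Psi combQ b (s a)" using Q.wb_mono_right[OF faP w fa] .
    then obtain c where c: "c \<in> (\<lambda>g. g a) ` X" "ileq combQ b c"
      using F_pt_dir[OF X(1,2) a] sa Q.le_refl[OF faP(2)] unfolding way_below_def by blast
    then obtain g where g: "g\<in>X" "ileq combQ b (g a)" by blast
    have gF: "g \<in> cont_maps Phi combP Psi combQ" using g X(1) by blast
    have gs: "scont Phi combP Psi combQ g" "\<forall>p\<in>Phi. g p \<in> Psi" using gF unfolding cont_maps_iff by blast+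
    have "ileq (fun_comb Phi combQ) \<sigma> g" unfolding leF[OF gF]
    proof
      fix q assume q: "q\<in>Phi"
      show "ileq combQ (\<sigma> q) (g q)"
      proof (cases "way_below Phi combP a q")
        case True
        have "ileq combP a q" using P.wb_le[OF q True] .
        then have "ileq combQ (g a) (g q)" using scont_mono[OF dfia_jsl[OF DP] gs(1) a q] by blast
        then have "ileq combQ b (g q)" using Q.le_trans[OF b _ _ g(2)] gs(2) a q by blast
        then show ?thesis unfolding \<sigma>_def using q True by simp
      next
        case False then show ?thesis unfolding \<sigma>_def using q Q.e_le gs(2) by simp
      qed
    qed
    then have "\<exists>c\<in>X. ileq (fun_comb Phi combQ) \<sigma> c" using g by blast
    then show "\<exists>c\<in>X. ileq (fun_comb Phi combQ) \<sigma> c" .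
  qed
qed



theorem lemma3p13:
  fixes Phi :: "'a set" and combP :: "'a \<Rightarrow> 'a \<Rightarrow> 'a" and eP :: 'a
    and focP :: "'a \<Rightarrow> 'd::lattice \<Rightarrow> 'a"
    and Psi :: "'b set" and combQ :: "'b \<Rightarrow> 'b \<Rightarrow> 'b" and eQ :: 'b
    and focQ :: "'b \<Rightarrow> 'e::lattice \<Rightarrow> 'b"
  assumes "s_continuous_ia Phi combP eP focP"
    and "s_continuous_ia Psi combQ eQ focQ"
  shows "continuous_ia (cont_maps Phi combP Psi combQ) (fun_comb Phi combQ)
           (fun_neutral Phi eQ) (fun_foc Phi focP focQ)"
proof -
  note SP = assms(1) and SQ = assms(2)
  have DP: "dfia Phi combP eP focP" using SP unfolding s_continuous_ia_def by blast
  have DQ: "dfia Psi combQ eQ focQ" using SQ unfolding s_continuous_ia_def by blast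
  obtain GP where CP: "cjsl Phi combP eP GP" using s_cont_cjsl[OF SP] by blast
  obtain GQ where CQ: "cjsl Psi combQ eQ GQ" using s_cont_cjsl[OF SQ] by blast
  interpret P: cjsl Phi combP eP GP by (fact CP)
  interpret Q: cjsl Psi combQ eQ GQ by (fact CQ)
  let ?F = "cont_maps Phi combP Psi combQ"
  have DF: "dfia ?F (fun_comb Phi combQ) (fun_neutral Phi eQ) (fun_foc Phi focP focQ)"
    using F_dfia[OF SP SQ] .
  interpret F: jsl ?F "fun_comb Phi combQ" "fun_neutral Phi eQ" using dfia_jsl[OF DF] .
  obtain tP :: 'd where tP: "\<forall>x. x \<le> tP" using SP unfolding s_continuous_ia_def by blast
  obtain tQ :: 'e where tQ: "\<forall>x. x \<le> tQ" using SQ unfolding s_continuous_ia_def by blast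
  have top: "\<exists>t::'d\<times>'e. \<forall>x. x \<le> t"
  proof
    show "\<forall>x. x \<le> (tP, tQ)" using tP tQ by (simp add: less_eq_prod_def)
  qed
  have B: "basis_ok ?F (fun_comb Phi combQ) (fun_neutral Phi eQ) ?F"
    unfolding basis_ok_def
  proof (intro conjI allI impI)
    show "?F \<subseteq> ?F" by simp
    show "fun_neutral Phi eQ \<in> ?F" by (fact F.e_in)
    show "\<forall>a\<in>?F. \<forall>b\<in>?F. fun_comb Phi combQ a b \<in> ?F" using F.cl by blast
  next
    fix X assume "X \<subseteq> ?F" "idirected (fun_comb Phi combQ) X"
    then show "\<exists>s. is_isup ?F (fun_comb Phi combQ) X s" using F_sup[OF P.jsl_axioms CQ] by blast
  qed
  have A: "\<forall>f\<in>?F. is_isup ?F (fun_comb Phi combQ) {g\<in>?F. way_below ?F (fun_comb Phi combQ) g f} f"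
  proof
    fix f assume f: "f \<in> ?F"
    have fs: "scont Phi combP Psi combQ f" "\<forall>p\<in>Phi. f p \<in> Psi" using f unfolding cont_maps_iff by blast+
    show "is_isup ?F (fun_comb Phi combQ) {g\<in>?F. way_below ?F (fun_comb Phi combQ) g f} f"
      unfolding is_isup_def
    proof (intro conjI ballI impI)
      show "f \<in> ?F" by (fact f)
    next
      fix g assume "g \<in> {g\<in>?F. way_below ?F (fun_comb Phi combQ) g f}"
      then show "ileq (fun_comb Phi combQ) g f" using F.wb_le[OF f] by blast
    next
      fix u assume u: "u \<in> ?F" "\<forall>g\<in>{g\<in>?F. way_below ?F (fun_comb Phi combQ) g f}. ileq (fun_comb Phi combQ) g u"
      have uv: "\<forall>p\<in>Phi. u p \<in> Psi" using u unfolding cont_maps_iff by blast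
      have "\<forall>p\<in>Phi. ileq combQ (f p) (u p)"
      proof
        fix p assume p: "p \<in> Phi"
        have fp: "f p \<in> Psi" using fs p by blast
        have "\<forall>b\<in>{b\<in>GQ. way_below Psi combQ b (f p)}. ileq combQ b (u p)"
        proof
          fix b assume b: "b \<in> {b\<in>GQ. way_below Psi combQ b (f p)}"
          have bP: "b \<in> Psi" using b Q.GP by blast
          obtain b' where b': "b' \<in> Psi" "way_below Psi combQ b b'" "way_below Psi combQ b' (f p)"
            using Q.interp[OF bP fp] b by blast
          define A where "A = {a\<in>GP. way_below Phi combP a p}"
          have AP: "A \<subseteq> Phi" unfolding A_def using P.G_sub by blast
          have Ad: "idirected combP A" unfolding A_def using P.approx_dir[OF p] .
          have As: "is_isup Phi combP A p" unfolding A_def using P.approx[OF p] .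
          have fA: "is_isup Psi combQ (f ` A) (f p)" using scontD[OF fs(1) AP Ad As] .
          have fAP: "f ` A \<subseteq> Psi" using AP fs by blast
          have fAd: "idirected combQ (f ` A)"
            using P.mono_dir[OF AP Ad] scont_mono[OF P.jsl_axioms fs(1)] by blast
          obtain c where c: "c \<in> f ` A" "ileq combQ b' c"
            using b'(3) fAP fAd fA Q.le_refl[OF fp] unfolding way_below_def by blast
          then obtain a where a: "a \<in> GP" "way_below Phi combP a p" "ileq combQ b' (f a)"
            unfolding A_def by blast
          have aP: "a \<in> Phi" using a P.GP by blast
          have wfa: "way_below Psi combQ b (f a)" using Q.wb_mono_right[OF b'(1) _ b'(2) a(3)] fs aP by blast
          define \<sigma> where "\<sigma> = (\<lambda>q. if q\<in>Phi then (if way_below Phi combP a q then b else eQ) else undefined)"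
          have \<sigma>F: "\<sigma> \<in> ?F" unfolding \<sigma>_def using step_in[OF CP Q.jsl_axioms aP bP] .
          have "way_below ?F (fun_comb Phi combQ) \<sigma> f"
            unfolding \<sigma>_def using step_wb[OF SP SQ CQ aP bP f wfa \<sigma>F[unfolded \<sigma>_def]] .
          then have "ileq (fun_comb Phi combQ) \<sigma> u" using u \<sigma>F by blast
          then have "ileq combQ (\<sigma> p) (u p)" using leF[OF u(1)] p by blast
          then show "ileq combQ b (u p)" unfolding \<sigma>_def using p a by simp
        qed
        then show "ileq combQ (f p) (u p)" using Q.approx[OF fp] uv p unfolding is_isup_def by blast
      qed
      then show "ileq (fun_comb Phi combQ) f u" using leF[OF u(1)] by blast
    qed
  qed
  show ?thesis unfolding continuous_ia_def using DF top B A by blast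
qed


end
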